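(* Fix a shift $G$ for a nonempty configuration. In one outer iteration of the inter-level sampler, the probability that level $\ell$ is accepted (returned) is exactly $W_\ell2^G/A(G)$. Consequently, the probability that the outer iteration accepts some level is $M(G)/A(G)$.
   Context: Fix an integer $b\ge 2$. There is a set $\mathcal L$ of $N$ levels, which are consecutive integers. Each level $\ell$ holds a finite (possibly empty) multiset of normalized significands, each an integer in $[2^{b-1},2^b)$. Let $z$ be the total number of stored significands over all levels; assume $z<2^b$. For each level, $SS_\ell$ is the sum of its significands (so $SS_\ell=0$ iff the level is empty); set $SS_\ell=0$ for integers $\ell\notin\mathcal L$. The level weight is $W_\ell=SS_\ell2^\ell$. For an integer global shift $G$, $A_\ell(G)=\lfloor W_\ell2^G\rfloor+1$ if $SS_\ell>0$ and $A_\ell(G)=0$ if $SS_\ell=0$; $A(G)=\sum_\ell A_\ell(G)$ and $M(G)=\sum_\ell W_\ell2^G$. The configuration is nonempty if $z\ge1$. Inter-level sampler (Algorithm 1), with shift $G$ and $A=A(G)$: it performs independent outer iterations. In an outer iteration, draw $x$ uniformly from $\{1,\dots,A\}$ and scan the levels in decreasing order starting from the largest nonempty level. At the current level $\ell$: if $x<A_\ell(G)$, return $\ell$; if $x=A_\ell(G)$, run the refinement loop for $m=1,2,\dots$: draw $r$ uniformly from $\{0,\dots,2^b-1\}$ independently, let $t=\lfloor SS_\ell 2^{\ell+G+mb}\rfloor \bmod 2^b$; if $r<t$ return $\ell$; else if $r>t$ or $\ell+G+mb\ge 0$, abandon this outer iteration and start a new one; otherwise continue with $m+1$. If $x>A_\ell(G)$,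 set $x\leftarrow x-A_\ell(G)$ and move to the next lower level. *)

theory Defs
  imports "HOL-Probability.Probability"
begin

definition SSof :: "int \<Rightarrow> int \<Rightarrow> (int \<Rightarrow> nat multiset) \<Rightarrow> int \<Rightarrow> nat" where
  "SSof lo hi S l = (if l \<in> {lo..hi} then sum_mset (S l) else 0)"

definition Wlev :: "(int \<Rightarrow> nat) \<Rightarrow> int \<Rightarrow> real" where
  "Wlev SS l = real (SS l) * 2 powr real_of_int l"

definition Alev :: "(int \<Rightarrow> nat) \<Rightarrow> int \<Rightarrow> int \<Rightarrow> int" where
  "Alev SS G l = (if SS l > 0 then \<lfloor>Wlev SS l * 2 powr real_of_int G\<rfloor> + 1 else 0)"

definition Atot :: "int \<Rightarrow> int \<Rightarrow> (int \<Rightarrow> nat) \<Rightarrow> int \<Rightarrow> int" where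
  "Atot lo hi SS G = (\<Sum>l\<in>{lo..hi}. Alev SS G l)"

definition Mtot :: "int \<Rightarrow> int \<Rightarrow> (int \<Rightarrow> nat) \<Rightarrow> int \<Rightarrow> real" where
  "Mtot lo hi SS G = (\<Sum>l\<in>{lo..hi}. Wlev SS l * 2 powr real_of_int G)"

definition tdig :: "nat \<Rightarrow> (int \<Rightarrow> nat) \<Rightarrow> int \<Rightarrow> int \<Rightarrow> nat \<Rightarrow> int" where
  "tdig b SS G l m =
     \<lfloor>real (SS l) * 2 powr real_of_int (l + G + int m * int b)\<rfloor> mod 2 ^ b"

(* Refinement loop at level l, starting at index m: True = return l, False = abandon.
   (The guard b = 0 is only there to make the recursion obviously terminating; b \<ge> 2 in the theorem.) *)
function refine :: "nat \<Rightarrow> (int \<Rightarrow> nat) \<Rightarrow> int \<Rightarrow> int \<Rightarrow> nat \<Rightarrow> bool pmf" where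
  "refine b SS G l m =
     bind_pmf (pmf_of_set {0..<2 ^ b})
       (\<lambda>r. if int r < tdig b SS G l m then return_pmf True
            else if int r > tdig b SS G l m \<or> l + G + int m * int b \<ge> 0 \<or> b = 0
              then return_pmf False
            else refine b SS G l (m + 1))"
  by auto
termination
  by (relation "Wellfounded.measure (\<lambda>(b, SS, G, l, m). nat (- (l + G + int m * int b)))") auto

(* Downward scan over the levels (given in decreasing order) with current value x;
   result Some l = return l, None = abandon this outer iteration. *)
fun scan :: "nat \<Rightarrow> (int \<Rightarrow> nat) \<Rightarrow> int \<Rightarrow> int list \<Rightarrow> int \<Rightarrow> int option pmf" where
  "scan b SS G [] x = return_pmf None"
| "scan b SS G (l # ls) x =
     (if x < Alev SS G l then return_pmf (Some l)
      else if x = Alev SS G l then map_pmf (\<lambda>acc. if acc then Some l else None) (refine b SS G l 1)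
      else scan b SS G ls (x - Alev SS G l))"

definition outer_iter :: "nat \<Rightarrow> int \<Rightarrow> int \<Rightarrow> (int \<Rightarrow> nat) \<Rightarrow> int \<Rightarrow> int option pmf" where
  "outer_iter b lo hi SS G =
     bind_pmf (pmf_of_set {1..Atot lo hi SS G})
       (\<lambda>x. scan b SS G (dropWhile (\<lambda>l. SS l = 0) (rev [lo..hi])) x)"

end

theory Submission
  imports Defs
begin

lemma frac_facts:
  fixes z :: real and b :: nat
  shows "frac (z / 2^b) * 2^b = real_of_int (\<lfloor>z\<rfloor> mod 2^b) + frac z"
proof -
  have f: "\<lfloor>z / 2^b\<rfloor> = \<lfloor>z\<rfloor> div 2^b"
    using floor_divide_real_eq_div[of "2^b" z] by simp
  have "frac (z / 2^b) * 2^b = z - real_of_int (\<lfloor>z\<rfloor> div 2^b) * 2^b"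
    by (simp add: frac_def f field_simps)
  also have "\<dots> = real_of_int (\<lfloor>z\<rfloor> mod 2^b) + (z - \<lfloor>z\<rfloor>)"
  proof -
    have "\<lfloor>z\<rfloor> = \<lfloor>z\<rfloor> div 2^b * 2^b + \<lfloor>z\<rfloor> mod 2^b" by (rule div_mult_mod_eq[symmetric])
    hence "real_of_int \<lfloor>z\<rfloor> = real_of_int (\<lfloor>z\<rfloor> div 2^b) * 2^b + real_of_int (\<lfloor>z\<rfloor> mod 2^b)"
      by (metis of_int_add of_int_mult of_int_numeral of_int_power)
    thus ?thesis by linarith
  qed
  finally show ?thesis by (simp add: frac_def)
qed

lemma frac_int_exp:
  assumes "E \<ge> 0"
  shows "frac (real n * 2 powr real_of_int E) = 0"
proof -
  have "2 powr real_of_int E = 2 ^ nat E"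
    using assms by (simp add: powr_realpow[symmetric])
  hence "real n * 2 powr real_of_int E = real (n * 2 ^ nat E)" by simp
  thus ?thesis by (metis frac_eq_0_iff Ints_of_nat)
qed

lemma refine_pmf:
  assumes "b > 0"
  shows "pmf (refine b SS G l m) True
     = frac (real (SS l) * 2 powr real_of_int (l + G + int m * int b) / 2^b)"
  using assms
proof (induction b SS G l m rule: refine.induct)
  case (1 b SS G l m)
  define E where "E = l + G + int m * int b"
  define z where "z = real (SS l) * 2 powr real_of_int E"
  define t where "t = tdig b SS G l m"
  define stop where "stop = (0 \<le> l + G + int m * int b \<or> b = 0)"
  define P' where "P' = pmf (refine b SS G l (m+1)) True"
  have t_eq: "t = \<lfloor>z\<rfloor> mod 2^b" unfolding t_def tdig_def z_def E_def by simp
  have t0: "0 \<le> t" and t1: "t < 2^b" unfolding t_eq by auto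
  have fr: "frac (z / 2^b) * 2^b = real_of_int t + frac z"
    unfolding t_eq by (rule frac_facts)
  have stopf: "stop \<Longrightarrow> frac z = 0"
    using 1(2) unfolding stop_def z_def E_def by (intro frac_int_exp) auto
  have IH: "\<not> stop \<Longrightarrow> P' = frac z"
  proof -
    assume ns: "\<not> stop"
    have "nat t \<in> set_pmf (pmf_of_set {0..<2 ^ b})"
      using t0 t1 by (simp add: nat_less_iff)
    moreover have "\<not> int (nat t) < tdig b SS G l m" using t0 t_def by simp
    moreover have "\<not> (tdig b SS G l m < int (nat t) \<or> 0 \<le> l + G + int m * int b \<or> b = 0)"
      using t0 t_def ns stop_def by simp
    ultimately have "P' = frac (real (SS l) * 2 powr real_of_int (l + G + int (m+1) * int b) / 2^b)"
      using 1 unfolding P'_def by blast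
    also have "real (SS l) * 2 powr real_of_int (l + G + int (m+1) * int b) / 2^b = z"
    proof -
      have "2 powr real_of_int (l + G + int (m+1) * int b) = 2 powr real_of_int E * 2 powr real b"
        unfolding E_def by (simp add: powr_add[symmetric] algebra_simps)
      thus ?thesis unfolding z_def by (simp add: powr_realpow)
    qed
    finally show ?thesis .
  qed
  have fin: "finite {0..<(2::nat)^b}" "{0..<(2::nat)^b} \<noteq> {}" by auto
  have "pmf (refine b SS G l m) True
      = (\<Sum>r\<in>{0..<2^b}. pmf (if int r < t then return_pmf True
            else if int r > t \<or> stop then return_pmf False
            else refine b SS G l (m + 1)) True) / real (card {0..<(2::nat)^b})"
    by (subst refine.simps) (simp only: pmf_bind_pmf_of_set[OF fin(2) fin(1)] t_def stop_def)
  also have "(\<lambda>r. pmf (if int r < t then return_pmf True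
            else if int r > t \<or> stop then return_pmf False
            else refine b SS G l (m + 1)) True)
     = (\<lambda>r. (if r < nat t then 1 else 0) + (if r = nat t then (if stop then 0 else P') else 0))"
    using t0 by (auto simp: P'_def fun_eq_iff)
  also have "(\<Sum>r\<in>{0..<2^b}. (if r < nat t then 1 else 0) + (if r = nat t then (if stop then 0 else P') else 0))
     = real (nat t) + (if stop then 0 else P')"
  proof -
    have a: "(\<Sum>r\<in>{0..<(2::nat)^b}. (if r < nat t then 1 else 0 :: real)) = real (nat t)"
    proof -
      have "nat t < (2::nat)^b" using t0 t1 by (simp add: nat_less_iff)
      hence e: "{0..<(2::nat)^b} \<inter> {r. r < nat t} = {0..<nat t}"
        by (intro set_eqI iffI) (auto intro: order.strict_trans)
      show ?thesis by (simp add: sum.If_cases e)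
    qed
    have c: "nat t \<in> {0..<(2::nat)^b}" using t0 t1 by (simp add: nat_less_iff)
    have "(\<Sum>r\<in>{0..<(2::nat)^b}. (if r = nat t then (if stop then 0 else P') else 0)) = (if stop then 0 else P')"
      using c by (simp add: sum.delta)
    with a show ?thesis by (simp add: sum.distrib)
  qed
  finally have "pmf (refine b SS G l m) True = (real (nat t) + (if stop then 0 else P')) / 2^b"
    by simp
  also have "\<dots> = frac (z / 2^b)"
    using fr stopf IH t0 by (auto simp: field_simps)
  finally show ?case unfolding z_def E_def .
qed


lemma Alev_nonneg: "Alev SS G l \<ge> 0"
  unfolding Alev_def Wlev_def by auto

lemma refine_one:
  assumes "b > 0"
  shows "pmf (refine b SS G l 1) True = frac (Wlev SS l * 2 powr real_of_int G)"
proof -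
  have "real (SS l) * 2 powr real_of_int (l + G + int 1 * int b) / 2^b = Wlev SS l * 2 powr real_of_int G"
    by (simp add: Wlev_def powr_add powr_realpow[symmetric])
  thus ?thesis using refine_pmf[OF assms, of SS G l 1] by simp
qed

lemma pmf_map_refine:
  "pmf (map_pmf (\<lambda>acc. if acc then Some l0 else None) (refine b SS G l0 1)) (Some l)
   = (if l = l0 then pmf (refine b SS G l0 1) True else 0)"
proof -
  have "(\<lambda>acc. if acc then Some l0 else None) -` {Some l} = (if l = l0 then {True} else {})"
    by (auto split: if_splits)
  thus ?thesis by (simp add: pmf_map measure_pmf_single)
qed

lemma scan_sum:
  assumes "distinct ls" "b > 0"
  shows "(\<Sum>x\<in>{1..sum_list (map (Alev SS G) ls)}. pmf (scan b SS G ls x) (Some l))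
       = (if l \<in> set ls then Wlev SS l * 2 powr real_of_int G else 0)"
  using assms(1)
proof (induction ls)
  case Nil
  then show ?case by simp
next
  case (Cons l0 rest)
  define a where "a = Alev SS G l0"
  define T where "T = sum_list (map (Alev SS G) rest)"
  have a0: "a \<ge> 0" unfolding a_def by (rule Alev_nonneg)
  have T0: "T \<ge> 0" unfolding T_def by (induction rest) (auto intro: add_nonneg_nonneg Alev_nonneg)
  have IH: "(\<Sum>x\<in>{1..T}. pmf (scan b SS G rest x) (Some l))
       = (if l \<in> set rest then Wlev SS l * 2 powr real_of_int G else 0)"
    using Cons unfolding T_def by simp
  have split: "{1..a+T} = {1..a} \<union> {a+1..a+T}" using a0 T0 by auto
  have "(\<Sum>x\<in>{1..a+T}. pmf (scan b SS G (l0#rest) x) (Some l))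
     = (\<Sum>x\<in>{1..a}. pmf (scan b SS G (l0#rest) x) (Some l))
       + (\<Sum>x\<in>{a+1..a+T}. pmf (scan b SS G (l0#rest) x) (Some l))"
    unfolding split by (rule sum.union_disjoint) auto
  also have "(\<Sum>x\<in>{a+1..a+T}. pmf (scan b SS G (l0#rest) x) (Some l))
      = (\<Sum>x\<in>{1..T}. pmf (scan b SS G rest x) (Some l))"
  proof -
    have eq: "{a+1..a+T} = (\<lambda>x. x + a) ` {1..T}" by (simp add: add.commute)
    have "(\<Sum>x\<in>{a+1..a+T}. pmf (scan b SS G (l0#rest) x) (Some l))
        = sum ((\<lambda>x. pmf (scan b SS G (l0#rest) x) (Some l)) \<circ> (\<lambda>x. x + a)) {1..T}"
      unfolding eq by (rule sum.reindex) (simp add: inj_on_def)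
    also have "\<dots> = (\<Sum>x\<in>{1..T}. pmf (scan b SS G rest x) (Some l))"
    proof (rule sum.cong)
      fix x assume "x \<in> {1..T}"
      hence "scan b SS G (l0#rest) (x + a) = scan b SS G rest x" by (simp add: a_def)
      thus "((\<lambda>x. pmf (scan b SS G (l0#rest) x) (Some l)) \<circ> (\<lambda>x. x + a)) x = pmf (scan b SS G rest x) (Some l)"
        by (simp only: comp_def)
    qed simp
    finally show ?thesis .
  qed
  also have "(\<Sum>x\<in>{1..a}. pmf (scan b SS G (l0#rest) x) (Some l))
      = (if l = l0 then Wlev SS l * 2 powr real_of_int G else 0)"
  proof (cases "a = 0")
    case True
    have fl: "\<lfloor>Wlev SS l0 * 2 powr real_of_int G\<rfloor> \<ge> 0" by (simp add: Wlev_def)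
    have "SS l0 = 0"
    proof (rule ccontr)
      assume "SS l0 \<noteq> 0"
      hence "a = \<lfloor>Wlev SS l0 * 2 powr real_of_int G\<rfloor> + 1" unfolding a_def Alev_def by simp
      with fl True show False by linarith
    qed
    thus ?thesis using True by (simp add: Wlev_def)
  next
    case False
    hence pos: "SS l0 > 0" unfolding a_def Alev_def by (auto split: if_splits)
    have s: "{1..a} = insert a {1..a-1}" using False a0 by auto
    have "(\<Sum>x\<in>{1..a}. pmf (scan b SS G (l0#rest) x) (Some l))
       = pmf (scan b SS G (l0#rest) a) (Some l) + (\<Sum>x\<in>{1..a-1}. pmf (scan b SS G (l0#rest) x) (Some l))"
      unfolding s by (rule sum.insert) auto
    also have "pmf (scan b SS G (l0#rest) a) (Some l) = (if l = l0 then frac (Wlev SS l0 * 2 powr real_of_int G) else 0)"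
      using pmf_map_refine[of l0 b SS G l] refine_one[OF assms(2)] by (simp add: a_def)
    also have "(\<Sum>x\<in>{1..a-1}. pmf (scan b SS G (l0#rest) x) (Some l))
        = (\<Sum>x\<in>{1..a-1}. (if l = l0 then 1 else 0))"
      by (rule sum.cong) (auto simp: a_def pmf_return)
    also have "\<dots> = (if l = l0 then real_of_int (a - 1) else 0)"
      using False a0 by simp
    finally have fin: "(\<Sum>x\<in>{1..a}. pmf (scan b SS G (l0#rest) x) (Some l)) = (if l = l0 then frac (Wlev SS l0 * 2 powr real_of_int G) else 0) + (if l = l0 then real_of_int (a - 1) else 0)" .
    show ?thesis
    proof -
      have "real_of_int (a - 1) = real_of_int \<lfloor>Wlev SS l0 * 2 powr real_of_int G\<rfloor>"
        using pos unfolding a_def Alev_def by simp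
      thus ?thesis using fin by (auto simp: frac_def)
    qed
  qed
  finally show ?case
    using IH Cons.prems unfolding a_def T_def by auto
qed


theorem mainTheorem2:
  fixes b :: nat and lo hi G :: int and S :: "int \<Rightarrow> nat multiset"
  assumes "b \<ge> 2"
    and "lo \<le> hi"
    and "\<forall>l\<in>{lo..hi}. \<forall>s\<in>#S l. 2 ^ (b - 1) \<le> s \<and> s < 2 ^ b"
    and "(\<Sum>l\<in>{lo..hi}. size (S l)) < 2 ^ b"
    and "(\<Sum>l\<in>{lo..hi}. size (S l)) \<ge> 1"
  shows "(\<forall>l. pmf (outer_iter b lo hi (SSof lo hi S) G) (Some l)
               = Wlev (SSof lo hi S) l * 2 powr real_of_int G / real_of_int (Atot lo hi (SSof lo hi S) G))
       \<and> measure_pmf.prob (outer_iter b lo hi (SSof lo hi S) G) (range Some)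
               = Mtot lo hi (SSof lo hi S) G / real_of_int (Atot lo hi (SSof lo hi S) G)"
proof -
  define SS where "SS = SSof lo hi S"
  define A where "A = Atot lo hi SS G"
  define xs where "xs = rev [lo..hi]"
  define ls where "ls = dropWhile (\<lambda>l. SS l = 0) xs"
  define p where "p = outer_iter b lo hi SS G"
  have b0: "b > 0" using assms(1) by simp
  have dxs: "distinct xs" unfolding xs_def by simp
  have dls: "distinct ls" unfolding ls_def using dxs by (rule distinct_dropWhile)
  have sxs: "set xs = {lo..hi}" unfolding xs_def by simp
  have tw0: "sum_list (map (Alev SS G) (takeWhile (\<lambda>l. SS l = 0) xs)) = 0"
  proof -
    have "\<forall>l\<in>set (takeWhile (\<lambda>l. SS l = 0) xs). Alev SS G l = 0"
      by (auto dest: set_takeWhileD simp: Alev_def)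
    moreover have "\<And>ys. (\<forall>l\<in>set ys. Alev SS G l = 0) \<Longrightarrow> sum_list (map (Alev SS G) ys) = 0"
      subgoal for ys by (induction ys) auto done
    ultimately show ?thesis by blast
  qed
  have Aeq: "A = sum_list (map (Alev SS G) ls)"
  proof -
    have "A = sum_list (map (Alev SS G) xs)"
      unfolding A_def Atot_def xs_def by (simp add: sum_list_distinct_conv_sum_set)
    also have "\<dots> = sum_list (map (Alev SS G) (takeWhile (\<lambda>l. SS l = 0) xs)) + sum_list (map (Alev SS G) ls)"
    proof -
      have "xs = takeWhile (\<lambda>l. SS l = 0) xs @ dropWhile (\<lambda>l. SS l = 0) xs" by simp
      hence "sum_list (map (Alev SS G) xs) = sum_list (map (Alev SS G) (takeWhile (\<lambda>l. SS l = 0) xs @ dropWhile (\<lambda>l. SS l = 0) xs))" by metis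
      thus ?thesis unfolding ls_def by (simp only: map_append sum_list_append)
    qed
    finally show ?thesis using tw0 by simp
  qed
  have Apos: "A > 0"
  proof -
    obtain l0 where l0: "l0 \<in> {lo..hi}" "size (S l0) \<ge> 1"
      using assms(5) by (metis (no_types, lifting) less_one not_le sum_eq_0_iff finite_atLeastAtMost)
    have ne: "S l0 \<noteq> {#}" using l0(2) by auto
    obtain s where s: "s \<in># S l0" using ne by (metis multiset_nonemptyE)
    have s1: "2^(b-1) \<le> s" using assms(3) l0(1) s by blast
    have "(1::nat) \<le> 2^(b-1)" by simp
    hence "s \<ge> 1" using s1 by linarith
    moreover have "sum_mset (S l0) = s + sum_mset (S l0 - {#s#})" using s by (rule sum_mset.remove)
    ultimately have "sum_mset (S l0) \<ge> 1" by linarith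
    hence pos: "SS l0 > 0" unfolding SS_def SSof_def using l0(1) by simp
    have "Alev SS G l0 \<ge> 1" using pos unfolding Alev_def by (simp add: Wlev_def)
    moreover have "Alev SS G l0 \<le> A" unfolding A_def Atot_def
      using l0(1) by (intro member_le_sum Alev_nonneg) auto
    ultimately show ?thesis by simp
  qed
  have W0: "l \<notin> set ls \<Longrightarrow> Wlev SS l = 0" for l
  proof -
    assume nl: "l \<notin> set ls"
    have "SS l = 0"
    proof (cases "l \<in> {lo..hi}")
      case True
      hence "l \<in> set (takeWhile (\<lambda>l. SS l = 0) xs) \<union> set ls"
        unfolding ls_def using sxs by (metis set_append takeWhile_dropWhile_id)
      thus ?thesis using nl by (auto dest: set_takeWhileD)
    next
      case False thus ?thesis unfolding SS_def SSof_def by (simp only: if_False)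
    qed
    thus ?thesis by (simp add: Wlev_def)
  qed
  have fin: "finite {1..A}" "{1..A} \<noteq> {}" using Apos by auto
  have cardA: "real (card {1..A}) = real_of_int A" using Apos by simp
  have P: "pmf p (Some l) = Wlev SS l * 2 powr real_of_int G / real_of_int A" for l
  proof -
    have "pmf p (Some l) = (\<Sum>x\<in>{1..A}. pmf (scan b SS G ls x) (Some l)) / real (card {1..A})"
      unfolding p_def outer_iter_def ls_def xs_def A_def[symmetric]
      by (rule pmf_bind_pmf_of_set[OF fin(2) fin(1)])
    also have "(\<Sum>x\<in>{1..A}. pmf (scan b SS G ls x) (Some l)) = Wlev SS l * 2 powr real_of_int G"
      unfolding Aeq using scan_sum[OF dls b0, of SS G l] W0[of l] by auto
    finally show ?thesis using cardA by simp
  qed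
  have "measure_pmf.prob p (range Some) = measure_pmf.prob p (range Some \<inter> set_pmf p)"
    by (simp add: measure_Int_set_pmf)
  also have "range Some \<inter> set_pmf p = Some ` {lo..hi} \<inter> set_pmf p"
  proof -
    have "Some l \<in> set_pmf p \<Longrightarrow> l \<in> {lo..hi}" for l
    proof -
      assume "Some l \<in> set_pmf p"
      hence "pmf p (Some l) \<noteq> 0" by (simp add: set_pmf_iff)
      hence "Wlev SS l \<noteq> 0" using P[of l] by auto
      hence "SS l \<noteq> 0" by (auto simp: Wlev_def)
      thus ?thesis unfolding SS_def SSof_def by (auto split: if_splits)
    qed
    thus ?thesis by auto
  qed
  also have "measure_pmf.prob p (Some ` {lo..hi} \<inter> set_pmf p) = measure_pmf.prob p (Some ` {lo..hi})"
    by (simp add: measure_Int_set_pmf)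
  also have "\<dots> = sum (pmf p) (Some ` {lo..hi})"
    by (rule measure_measure_pmf_finite) simp
  also have "\<dots> = (\<Sum>l\<in>{lo..hi}. pmf p (Some l))"
    by (subst sum.reindex) (auto simp: inj_on_def)
  also have "\<dots> = Mtot lo hi SS G / real_of_int A"
    unfolding Mtot_def P by (simp add: sum_divide_distrib)
  finally show ?thesis using P unfolding p_def A_def SS_def by simp
qed

end
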